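(* Let $X$ be a Type I space, written as $X=\bigcup_{\alpha<\omega_1}U_\alpha$ as in the definition of Type I, and let $h_t:X\to X$, $t\in[0,1]$, be an isotopy of homeomorphisms. Then $$\Big\{\alpha<\omega_1 \;:\; h_t\Big(\bigcup_{\beta<\alpha}U_\beta\Big)=\bigcup_{\beta<\alpha}U_\beta \text{ for all } t\in[0,1]\Big\}$$ is a closed unbounded subset of $\omega_1$.
   Context: A topological space $X$ is of Type I if it is the union of an $\omega_1$-sequence $\langle U_\alpha:\alpha<\omega_1\rangle$ of open subsets such that whenever $\alpha<\beta<\omega_1$ we have $\overline{U_\alpha}\subset U_\beta$ and $U_\alpha$ is Lindelöf. An isotopy of homeomorphisms of $X$ is a continuous map $H:X\times[0,1]\to X$ such that each $h_t=H(\cdot,t)$ is a homeomorphism of $X$. *)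

theory Defs
  imports "HOL-Analysis.Analysis"
begin

text \<open>A well-ordered type is (order-isomorphic to) omega_1 iff it is uncountable
  and every proper initial segment is countable.\<close>
definition omega1_type :: "'i::wellorder itself \<Rightarrow> bool" where
  "omega1_type _ \<longleftrightarrow> uncountable (UNIV :: 'i set) \<and> (\<forall>\<alpha>::'i. countable {\<beta>. \<beta> < \<alpha>})"

definition type_I_seq :: "('i::wellorder \<Rightarrow> 'a::topological_space set) \<Rightarrow> bool" where
  "type_I_seq U \<longleftrightarrow>
     (\<Union>\<alpha>. U \<alpha>) = UNIV \<and>
     (\<forall>\<alpha>. open (U \<alpha>)) \<and>
     (\<forall>\<alpha>. Lindelof_space (subtopology euclidean (U \<alpha>))) \<and>
     (\<forall>\<alpha> \<beta>. \<alpha> < \<beta> \<longrightarrow> closure (U \<alpha>) \<subseteq> U \<beta>)"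

definition isotopy :: "('a::topological_space \<times> real \<Rightarrow> 'a) \<Rightarrow> bool" where
  "isotopy H \<longleftrightarrow> continuous_on (UNIV \<times> {0..1}) H \<and>
     (\<forall>t\<in>{0..1}. \<exists>g. homeomorphism UNIV UNIV (\<lambda>x. H (x, t)) g)"

definition club :: "'i::wellorder set \<Rightarrow> bool" where
  "club C \<longleftrightarrow>
     (\<forall>\<alpha>. \<exists>\<gamma>\<in>C. \<alpha> \<le> \<gamma>) \<and>
     (\<forall>\<alpha>. ((\<exists>\<gamma>\<in>C. \<gamma> < \<alpha>) \<and> (\<forall>\<beta><\<alpha>. \<exists>\<gamma>\<in>C. \<beta> < \<gamma> \<and> \<gamma> < \<alpha>)) \<longrightarrow> \<alpha> \<in> C)"

end

theory Submission
  imports Defs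
begin

lemma o1_bound:
  fixes A :: "'i::wellorder set"
  assumes o: "omega1_type TYPE('i)" and c: "countable A"
  shows "\<exists>\<gamma>. \<forall>a\<in>A. a < \<gamma>"
proof (rule ccontr)
  assume "\<not> ?thesis"
  then have "\<forall>\<gamma>. \<exists>a\<in>A. \<gamma> \<le> a" by (meson not_le)
  then have "UNIV \<subseteq> (\<Union>a\<in>A. insert a {\<beta>. \<beta> < a})" by (auto simp: le_less)
  moreover have "countable (\<Union>a\<in>A. insert a {\<beta>. \<beta> < a})"
    using o c unfolding omega1_type_def by auto
  ultimately have "countable (UNIV::'i set)" by (rule countable_subset)
  with o show False unfolding omega1_type_def by auto
qed

lemma tI_open: "type_I_seq U \<Longrightarrow> open (U a)"
  unfolding type_I_seq_def by simp

lemma tI_lind: "type_I_seq U \<Longrightarrow> Lindelof_space (subtopology euclidean (U a))"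
  unfolding type_I_seq_def by simp

lemma tI_cov: "type_I_seq U \<Longrightarrow> \<exists>a. x \<in> U a"
  unfolding type_I_seq_def by (metis UNIV_I UN_iff)

lemma tI_cl: "type_I_seq U \<Longrightarrow> a < b \<Longrightarrow> closure (U a) \<subseteq> U b"
  unfolding type_I_seq_def by simp

lemma U_mono:
  assumes "type_I_seq U" "\<alpha> \<le> \<beta>"
  shows "U \<alpha> \<subseteq> U \<beta>"
  using assms closure_subset tI_cl by (metis order.order_iff_strict subset_trans)

lemma img_bound:
  fixes U :: "'i::wellorder \<Rightarrow> 'a::topological_space set" and g :: "'a \<Rightarrow> 'a"
  assumes o: "omega1_type TYPE('i)" and T: "type_I_seq U" and g: "continuous_on UNIV g"
  shows "\<exists>\<delta>. g ` U \<beta> \<subseteq> U \<delta>"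
proof -
  have L: "Lindelof_space (subtopology euclidean (U \<beta>))" using T by (rule tI_lind)
  have op: "\<forall>V \<in> (\<lambda>\<gamma>. g -` U \<gamma>) ` UNIV. openin euclidean V"
  proof
    fix V assume "V \<in> (\<lambda>\<gamma>. g -` U \<gamma>) ` UNIV"
    then obtain \<gamma> where V: "V = g -` U \<gamma>" by blast
    have "open (U \<gamma>)" using T by (rule tI_open)
    then have "open (g -` U \<gamma>)" using g continuous_on_open_vimage[OF open_UNIV, of g] by simp
    then show "openin euclidean V" using V by simp
  qed
  have cov: "topspace euclidean \<inter> U \<beta> \<subseteq> \<Union>((\<lambda>\<gamma>. g -` U \<gamma>) ` UNIV)"
  proof
    fix x assume "x \<in> topspace euclidean \<inter> U \<beta>"
    obtain \<gamma> where "g x \<in> U \<gamma>" using tI_cov[OF T] by blast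
    then show "x \<in> \<Union>((\<lambda>\<gamma>. g -` U \<gamma>) ` UNIV)" by blast
  qed
  have pc: "(\<forall>V \<in> (\<lambda>\<gamma>. g -` U \<gamma>) ` UNIV. openin euclidean V) \<and> topspace euclidean \<inter> U \<beta> \<subseteq> \<Union>((\<lambda>\<gamma>. g -` U \<gamma>) ` UNIV)"
    using op cov by (rule conjI)
  obtain V where V: "countable V" "V \<subseteq> (\<lambda>\<gamma>. g -` U \<gamma>) ` UNIV" "topspace euclidean \<inter> U \<beta> \<subseteq> \<Union>V"
    using mp[OF L[unfolded Lindelof_space_subtopology, THEN spec[of _ "(\<lambda>\<gamma>. g -` U \<gamma>) ` UNIV"]] pc] by blast
  obtain J where J1: "countable J" and VJ: "V = (\<lambda>\<gamma>. g -` U \<gamma>) ` J"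
    using V(1,2) countable_subset_image[of V "\<lambda>\<gamma>. g -` U \<gamma>" UNIV] by blast
  have J2: "U \<beta> \<subseteq> (\<Union>\<gamma>\<in>J. g -` U \<gamma>)" using V(3) VJ by simp
  obtain \<delta> where d: "\<forall>a\<in>J. a < \<delta>" using o1_bound[OF o J1] by blast
  have "U \<beta> \<subseteq> g -` U \<delta>"
  proof
    fix x assume "x \<in> U \<beta>"
    then obtain \<gamma> where "\<gamma> \<in> J" "g x \<in> U \<gamma>" using J2 by blast
    moreover have "U \<gamma> \<subseteq> U \<delta>" using U_mono[OF T] d \<open>\<gamma> \<in> J\<close> by (simp add: less_imp_le)
    ultimately show "x \<in> g -` U \<delta>" by blast
  qed
  then show ?thesis by blast
qed

lemma stab:
  fixes T :: "'i::wellorder \<Rightarrow> real set"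
  assumes o: "omega1_type TYPE('i)" and op: "\<And>\<delta>. open (T \<delta>)"
    and dec: "\<And>\<delta> \<delta>'. \<delta> \<le> \<delta>' \<Longrightarrow> T \<delta>' \<subseteq> T \<delta>"
    and nin: "\<And>t. \<exists>\<delta>. t \<notin> T \<delta>"
  shows "\<exists>\<delta>. T \<delta> = {}"
proof -
  obtain B :: "real set set" where B: "countable B" "\<And>C. C \<in> B \<Longrightarrow> open C"
    "\<And>S. open S \<Longrightarrow> \<exists>W. W \<subseteq> B \<and> S = \<Union>W"
    using univ_second_countable by blast
  define e where "e b = (LEAST \<delta>. \<not> b \<subseteq> T \<delta>)" for b
  obtain \<delta>0 where d0: "\<forall>a\<in>e ` B. a < \<delta>0" using o1_bound[OF o countable_image[OF B(1)]] by blast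
  have "T \<delta>0 = {}"
  proof (rule ccontr)
    assume "T \<delta>0 \<noteq> {}"
    then obtain t where t: "t \<in> T \<delta>0" by blast
    obtain W where W: "W \<subseteq> B" "T \<delta>0 = \<Union>W" using B(3)[OF op[of \<delta>0]] by blast
    then obtain b where b: "b \<in> B" "t \<in> b" "b \<subseteq> T \<delta>0" using t by blast
    obtain \<delta> where "t \<notin> T \<delta>" using nin by blast
    then have "\<not> b \<subseteq> T \<delta>" using b by blast
    then have nb: "\<not> b \<subseteq> T (e b)" unfolding e_def by (rule LeastI)
    have eb: "e b \<le> \<delta>0" using d0 b(1) by (auto intro: less_imp_le)
    have "T \<delta>0 \<subseteq> T (e b)" using eb by (rule dec)
    with nb b(3) show False by blast
  qed
  then show ?thesis by blast
qed


lemma ov: "continuous_on UNIV f \<Longrightarrow> open S \<Longrightarrow> open (f -` S)"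
  using continuous_on_open_vimage[OF open_UNIV, of f] by simp

lemma iso_cont:
  assumes "isotopy H"
  shows "continuous_on UNIV (\<lambda>s. H (y, max 0 (min 1 (s::real))))"
proof -
  have c1: "continuous_on (UNIV \<times> {0..1}) H" using assms unfolding isotopy_def by blast
  have c2: "continuous_on UNIV (\<lambda>s::real. (y, max 0 (min 1 s)))"
    by (intro continuous_intros)
  have "(\<lambda>s::real. (y, max 0 (min 1 s))) ` UNIV \<subseteq> UNIV \<times> {0..1}" by auto
  then show ?thesis using continuous_on_compose2[OF c1 c2] by blast
qed

lemma iso_homeo:
  assumes "isotopy H" "t \<in> {0..1}"
  obtains g where "homeomorphism UNIV UNIV (\<lambda>x. H (x, t)) g"
  using assms unfolding isotopy_def by blast

lemma KB:
  fixes U :: "'i::wellorder \<Rightarrow> 'a::topological_space set" and H :: "'a \<times> real \<Rightarrow> 'a"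
  assumes o: "omega1_type TYPE('i)" and TI: "type_I_seq U" and iso: "isotopy H"
  shows "\<exists>\<delta>. \<forall>t\<in>{0..1}. (\<lambda>x. H (x, t)) ` U \<beta> \<subseteq> U \<delta> \<and> (\<forall>y. H (y, t) \<in> U \<beta> \<longrightarrow> y \<in> U \<delta>)"
proof -
  define c where "c s = max 0 (min 1 s)" for s :: real
  have fc: "continuous_on UNIV (\<lambda>s. H (y, c s))" for y
    unfolding c_def by (rule iso_cont[OF iso])
  have cin: "c s \<in> {0..1}" for s unfolding c_def by auto
  have c01: "t \<in> {0..1} \<Longrightarrow> c t = t" for t unfolding c_def by auto
  define S where "S \<delta> = (\<Union>y\<in>U \<beta>. (\<lambda>s. H (y, c s)) -` (- closure (U \<delta>)))" for \<delta>
  define T where "T \<delta> = (\<Union>y\<in>- closure (U \<delta>). (\<lambda>s. H (y, c s)) -` U \<beta>)" for \<delta>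
  have Sop: "open (S \<delta>)" for \<delta>
    unfolding S_def
    by (intro open_UN ballI ov[OF fc] open_Compl closed_closure)
  have Top: "open (T \<delta>)" for \<delta>
    unfolding T_def
    by (intro open_UN ballI ov[OF fc] tI_open[OF TI])
  have cm: "\<delta> \<le> \<delta>' \<Longrightarrow> closure (U \<delta>) \<subseteq> closure (U \<delta>')" for \<delta> \<delta>'
    by (rule closure_mono[OF U_mono[OF TI]])
  have Sdec: "\<delta> \<le> \<delta>' \<Longrightarrow> S \<delta>' \<subseteq> S \<delta>" for \<delta> \<delta>'
    using cm[of \<delta> \<delta>'] unfolding S_def by blast
  have Tdec: "\<delta> \<le> \<delta>' \<Longrightarrow> T \<delta>' \<subseteq> T \<delta>" for \<delta> \<delta>'
    using cm[of \<delta> \<delta>'] unfolding T_def by blast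
  have nin: "\<exists>\<delta>. s \<notin> S \<delta>" "\<exists>\<delta>. s \<notin> T \<delta>" for s
  proof -
    obtain g where hg: "homeomorphism UNIV UNIV (\<lambda>x. H (x, c s)) g"
      using iso_homeo[OF iso cin] by blast
    have ch: "continuous_on UNIV (\<lambda>x. H (x, c s))" and cg: "continuous_on UNIV g"
      and gh: "\<And>x. g (H (x, c s)) = x"
      using hg unfolding homeomorphism_def by auto
    obtain d1 where d1: "(\<lambda>x. H (x, c s)) ` U \<beta> \<subseteq> U d1" using img_bound[OF o TI ch] by blast
    obtain d2 where d2: "g ` U \<beta> \<subseteq> U d2" using img_bound[OF o TI cg] by blast
    have "s \<notin> S d1"
    proof
      assume "s \<in> S d1"
      then obtain y where y: "y \<in> U \<beta>" "H (y, c s) \<notin> closure (U d1)" unfolding S_def by blast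
      have "H (y, c s) \<in> U d1" using d1 y(1) by blast
      then show False using y(2) closure_subset by blast
    qed
    then show "\<exists>\<delta>. s \<notin> S \<delta>" by blast
    have "s \<notin> T d2"
    proof
      assume "s \<in> T d2"
      then obtain y where y: "y \<notin> closure (U d2)" "H (y, c s) \<in> U \<beta>" unfolding T_def by blast
      then have "g (H (y, c s)) \<in> U d2" using d2 by blast
      then have "y \<in> U d2" using gh by simp
      then show False using y(1) closure_subset by blast
    qed
    then show "\<exists>\<delta>. s \<notin> T \<delta>" by blast
  qed
  obtain dS where dS: "S dS = {}" using stab[OF o Sop Sdec nin(1)] by blast
  obtain dT where dT: "T dT = {}" using stab[OF o Top Tdec nin(2)] by blast
  obtain \<delta> where d: "\<forall>a\<in>{dS, dT}. a < \<delta>" using o1_bound[OF o, of "{dS, dT}"] by auto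
  have "\<forall>t\<in>{0..1}. (\<lambda>x. H (x, t)) ` U \<beta> \<subseteq> U \<delta> \<and> (\<forall>y. H (y, t) \<in> U \<beta> \<longrightarrow> y \<in> U \<delta>)"
  proof (intro ballI conjI allI impI)
    fix t :: real assume t: "t \<in> {0..1}"
    show "(\<lambda>x. H (x, t)) ` U \<beta> \<subseteq> U \<delta>"
    proof
    fix z assume "z \<in> (\<lambda>x. H (x, t)) ` U \<beta>"
    then obtain x where x: "x \<in> U \<beta>" "z = H (x, t)" by blast
    have "t \<notin> S dS" using dS by blast
    then have "H (x, t) \<in> closure (U dS)" using x(1) c01[OF t] unfolding S_def by auto
    then show "z \<in> U \<delta>" using x(2) tI_cl[OF TI, of dS \<delta>] d by blast
    qed
  next
    fix t :: real and y assume t: "t \<in> {0..1}" and y: "H (y, t) \<in> U \<beta>"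
    have "t \<notin> T dT" using dT by blast
    then have "y \<in> closure (U dT)" using y c01[OF t] unfolding T_def by auto
    then show "y \<in> U \<delta>" using tI_cl[OF TI, of dT \<delta>] d by blast
  qed
  then show ?thesis by blast
qed


lemma step:
  fixes U :: "'i::wellorder \<Rightarrow> 'a::topological_space set" and H :: "'a \<times> real \<Rightarrow> 'a"
  assumes o: "omega1_type TYPE('i)" and TI: "type_I_seq U" and iso: "isotopy H"
  shows "\<exists>\<gamma>. \<alpha> < \<gamma> \<and> (\<forall>t\<in>{0..1}. (\<forall>x\<in>(\<Union>\<beta>\<in>{..<\<alpha>}. U \<beta>). H (x, t) \<in> (\<Union>\<beta>\<in>{..<\<gamma>}. U \<beta>))
       \<and> (\<forall>y. H (y, t) \<in> (\<Union>\<beta>\<in>{..<\<alpha>}. U \<beta>) \<longrightarrow> y \<in> (\<Union>\<beta>\<in>{..<\<gamma>}. U \<beta>)))"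
proof -
  have "\<forall>\<beta>. \<exists>\<delta>. \<forall>t\<in>{0..1}. (\<lambda>x. H (x, t)) ` U \<beta> \<subseteq> U \<delta> \<and> (\<forall>y. H (y, t) \<in> U \<beta> \<longrightarrow> y \<in> U \<delta>)"
    using KB[OF o TI iso] by blast
  then obtain b where b: "\<And>\<beta>. \<forall>t\<in>{0..1}. (\<lambda>x. H (x, t)) ` U \<beta> \<subseteq> U (b \<beta>) \<and> (\<forall>y. H (y, t) \<in> U \<beta> \<longrightarrow> y \<in> U (b \<beta>))"
    by metis
  have cl: "countable {..<\<alpha>}" using o unfolding omega1_type_def lessThan_def by blast
  obtain \<gamma> where g: "\<forall>a\<in>insert \<alpha> (b ` {..<\<alpha>}). a < \<gamma>"
    using o1_bound[OF o, of "insert \<alpha> (b ` {..<\<alpha>})"] cl by auto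
  show ?thesis
  proof (intro exI conjI ballI allI impI)
    show "\<alpha> < \<gamma>" using g by auto
  next
    fix t :: real and x assume t: "t \<in> {0..1}" and x: "x \<in> (\<Union>\<beta>\<in>{..<\<alpha>}. U \<beta>)"
    then obtain \<beta> where "\<beta> < \<alpha>" "x \<in> U \<beta>" by auto
    then have "H (x, t) \<in> U (b \<beta>)" using b[of \<beta>] t by blast
    moreover have "b \<beta> < \<gamma>" using g \<open>\<beta> < \<alpha>\<close> by auto
    ultimately show "H (x, t) \<in> (\<Union>\<beta>\<in>{..<\<gamma>}. U \<beta>)" by auto
  next
    fix t :: real and y assume t: "t \<in> {0..1}" and y: "H (y, t) \<in> (\<Union>\<beta>\<in>{..<\<alpha>}. U \<beta>)"
    then obtain \<beta> where "\<beta> < \<alpha>" "H (y, t) \<in> U \<beta>" by auto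
    then have "y \<in> U (b \<beta>)" using b[of \<beta>] t by blast
    moreover have "b \<beta> < \<gamma>" using g \<open>\<beta> < \<alpha>\<close> by auto
    ultimately show "y \<in> (\<Union>\<beta>\<in>{..<\<gamma>}. U \<beta>)" by auto
  qed
qed

theorem corollary2p2:
  fixes U :: "'i::wellorder \<Rightarrow> 'a::topological_space set"
    and H :: "'a \<times> real \<Rightarrow> 'a"
  assumes "omega1_type TYPE('i)"
    and "type_I_seq U"
    and "isotopy H"
  shows "club {\<alpha>. \<forall>t\<in>{0..1}. (\<lambda>x. H (x, t)) ` (\<Union>\<beta>\<in>{..<\<alpha>}. U \<beta>) = (\<Union>\<beta>\<in>{..<\<alpha>}. U \<beta>)}"
proof -
  note o = assms(1) and TI = assms(2) and iso = assms(3)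
  define W where "W \<alpha> = (\<Union>\<beta>\<in>{..<\<alpha>}. U \<beta>)" for \<alpha>
  define C where "C = {\<alpha>. \<forall>t\<in>{0..1}. (\<lambda>x. H (x, t)) ` W \<alpha> = W \<alpha>}"
  have surj: "\<exists>y. x = H (y, t)" if t01: "t \<in> {0..1}" for t x
  proof -
    obtain g where "homeomorphism UNIV UNIV (\<lambda>x. H (x, t)) g" using iso_homeo[OF iso t01] by blast
    then have "x = H (g x, t)" unfolding homeomorphism_def by auto
    then show ?thesis by blast
  qed
  have Wmono: "\<alpha> \<le> \<gamma> \<Longrightarrow> W \<alpha> \<subseteq> W \<gamma>" for \<alpha> \<gamma> unfolding W_def by (auto intro: less_le_trans)
  have unb: "\<exists>\<gamma>\<in>C. \<alpha> \<le> \<gamma>" for \<alpha>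
  proof -
    have "\<forall>\<alpha>. \<exists>\<gamma>. \<alpha> < \<gamma> \<and> (\<forall>t\<in>{0..1}. (\<forall>x\<in>W \<alpha>. H (x, t) \<in> W \<gamma>) \<and> (\<forall>y. H (y, t) \<in> W \<alpha> \<longrightarrow> y \<in> W \<gamma>))"
      unfolding W_def using step[OF o TI iso] by blast
    then obtain g where g: "\<And>\<alpha>. \<alpha> < g \<alpha> \<and> (\<forall>t\<in>{0..1}. (\<forall>x\<in>W \<alpha>. H (x, t) \<in> W (g \<alpha>)) \<and> (\<forall>y. H (y, t) \<in> W \<alpha> \<longrightarrow> y \<in> W (g \<alpha>)))"
      by metis
    define a where "a n = (g ^^ n) \<alpha>" for n
    have aS: "a (Suc n) = g (a n)" for n unfolding a_def by simp
    have ex: "\<exists>\<gamma>. \<forall>n. a n < \<gamma>"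
      using o1_bound[OF o, of "range a"] by auto
    define \<gamma> where "\<gamma> = (LEAST \<gamma>. \<forall>n. a n < \<gamma>)"
    have ag: "a n < \<gamma>" for n using LeastI_ex[OF ex] unfolding \<gamma>_def by blast
    have Wg: "x \<in> W \<gamma> \<Longrightarrow> \<exists>n. x \<in> W (a n)" for x
    proof -
      assume "x \<in> W \<gamma>"
      then obtain \<beta> where b: "\<beta> < \<gamma>" "x \<in> U \<beta>" unfolding W_def by auto
      then have "\<not> (\<forall>n. a n < \<beta>)" using not_less_Least unfolding \<gamma>_def by blast
      then obtain n where "\<beta> \<le> a n" by (meson not_less)
      then have "\<beta> < a (Suc n)" using g[of "a n"] aS[of n] by auto
      then show ?thesis using b(2) unfolding W_def by auto
    qed
    have WaW: "W (a n) \<subseteq> W \<gamma>" for n using Wmono[of "a n" \<gamma>] ag[of n] by auto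
    have "\<gamma> \<in> C" unfolding C_def
    proof (intro CollectI ballI equalityI subsetI)
      fix t :: real and z assume t: "t \<in> {0..1}" and "z \<in> (\<lambda>x. H (x, t)) ` W \<gamma>"
      then obtain x where x: "x \<in> W \<gamma>" "z = H (x, t)" by blast
      obtain n where "x \<in> W (a n)" using Wg[OF x(1)] by blast
      then have "z \<in> W (a (Suc n))" using g[of "a n"] t x(2) aS[of n] by auto
      then show "z \<in> W \<gamma>" using WaW by blast
    next
      fix t :: real and z assume t: "t \<in> {0..1}" and z: "z \<in> W \<gamma>"
      obtain n where n: "z \<in> W (a n)" using Wg[OF z] by blast
      obtain y where y: "z = H (y, t)" using surj[OF t] by blast
      then have "y \<in> W (a (Suc n))" using g[of "a n"] t n aS[of n] by auto
      then show "z \<in> (\<lambda>x. H (x, t)) ` W \<gamma>" using WaW y by blast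
    qed
    moreover have "\<alpha> \<le> \<gamma>" using ag[of 0] unfolding a_def by auto
    ultimately show ?thesis by blast
  qed
  have clo: "\<alpha> \<in> C" if h: "\<forall>\<beta><\<alpha>. \<exists>\<gamma>\<in>C. \<beta> < \<gamma> \<and> \<gamma> < \<alpha>" for \<alpha>
    unfolding C_def
  proof (intro CollectI ballI equalityI subsetI)
    fix t :: real and z assume t: "t \<in> {0..1}" and "z \<in> (\<lambda>x. H (x, t)) ` W \<alpha>"
    then obtain x where x: "x \<in> W \<alpha>" "z = H (x, t)" by blast
    then obtain \<beta> where b: "\<beta> < \<alpha>" "x \<in> U \<beta>" unfolding W_def by auto
    then obtain \<gamma> where c: "\<gamma> \<in> C" "\<beta> < \<gamma>" "\<gamma> < \<alpha>" using h by blast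
    have "x \<in> W \<gamma>" using b c unfolding W_def by auto
    then have "z \<in> (\<lambda>x. H (x, t)) ` W \<gamma>" using x(2) by blast
    then have "z \<in> W \<gamma>" using c(1) t unfolding C_def by blast
    then show "z \<in> W \<alpha>" using Wmono[OF less_imp_le[OF c(3)]] by blast
  next
    fix t :: real and z assume t: "t \<in> {0..1}" and z: "z \<in> W \<alpha>"
    then obtain \<beta> where b: "\<beta> < \<alpha>" "z \<in> U \<beta>" unfolding W_def by auto
    then obtain \<gamma> where c: "\<gamma> \<in> C" "\<beta> < \<gamma>" "\<gamma> < \<alpha>" using h by blast
    have "z \<in> W \<gamma>" using b c unfolding W_def by auto
    then have "z \<in> (\<lambda>x. H (x, t)) ` W \<gamma>" using c(1) t unfolding C_def by blast
    then show "z \<in> (\<lambda>x. H (x, t)) ` W \<alpha>" using Wmono[OF less_imp_le[OF c(3)]] by blast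
  qed
  have "club C" unfolding club_def using unb clo by blast
  then show ?thesis unfolding C_def W_def .
qed

end
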